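(* Let $A, B, C, D \in \mathrm{SL}(2,\mathbb{R})$ and for integers $k, \ell$ let $M_{k,\ell} = D^\ell C B^k A$. Suppose $\mathrm{Tr}(B) = \mathrm{Tr}(D)$ and that for some integer $n \ge 0$, $$\mathrm{Tr}(M_{0,0}) = \mathrm{Tr}(B^n), \quad \mathrm{Tr}(M_{1,1}) = \mathrm{Tr}(B^{n+2}), \quad \mathrm{Tr}(M_{2,2}) = \mathrm{Tr}(B^{n+4}).$$ Then for all integers $k \ge 3$, $\mathrm{Tr}(M_{k,k}) = \mathrm{Tr}(B^{n+2k})$. *)

theory Defs
  imports "HOL-Analysis.Analysis"
begin

primrec matpow :: "'a::semiring_1^'n^'n \<Rightarrow> nat \<Rightarrow> 'a^'n^'n" where
  "matpow A 0 = mat 1"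
| "matpow A (Suc k) = A ** matpow A k"

definition SL2 :: "(real^2^2) set" where
  "SL2 = {A. det A = 1}"

definition Mkl :: "real^2^2 \<Rightarrow> real^2^2 \<Rightarrow> real^2^2 \<Rightarrow> real^2^2 \<Rightarrow> nat \<Rightarrow> nat \<Rightarrow> real^2^2" where
  "Mkl A B C D k l = matpow D l ** C ** matpow B k ** A"

end

theory Submission imports Defs begin

lemma matpow_Suc_right: "matpow (A::'a::comm_ring_1^'n^'n) (Suc k) = matpow A k ** A"
  by (induction k) (simp_all add: matrix_mul_assoc)

lemma key:
  fixes B D Y :: "real^2^2"
  assumes "det B = 1" "det D = 1" "trace B = trace D"
  shows "D ** (D ** (D ** Y ** B) ** B) ** B
     = ((trace B)^2 - 1) *\<^sub>R (D ** (D ** Y ** B) ** B) - ((trace B)^2 - 1) *\<^sub>R (D ** Y ** B) + Y"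
proof -
  have b: "B$1$1 * B$2$2 - B$1$2 * B$2$1 = 1" using assms(1) by (simp add: det_2)
  have d: "D$1$1 * D$2$2 - D$1$2 * D$2$1 = 1" using assms(2) by (simp add: det_2)
  have t: "D$2$2 = B$1$1 + B$2$2 - D$1$1" using assms(3) by (simp add: trace_def sum_2)
  show ?thesis
    unfolding vec_eq_iff forall_2 using b d t
    by (simp add: matrix_matrix_mult_def sum_2 trace_def; algebra)
qed

lemma trlin:
  fixes P Q R A :: "real^2^2"
  shows "trace ((a *\<^sub>R P - a *\<^sub>R Q + R) ** A) = a * trace (P ** A) - a * trace (Q ** A) + trace (R ** A)"
  by (simp add: matrix_matrix_mult_def sum_2 trace_def algebra_simps)

theorem lemma2p4:
  fixes A B C D :: "real^2^2" and n :: nat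
  assumes "A \<in> SL2" and "B \<in> SL2" and "C \<in> SL2" and "D \<in> SL2"
    and "trace B = trace D"
    and "trace (Mkl A B C D 0 0) = trace (matpow B n)"
    and "trace (Mkl A B C D 1 1) = trace (matpow B (n + 2))"
    and "trace (Mkl A B C D 2 2) = trace (matpow B (n + 4))"
  shows "\<forall>k::nat. k \<ge> 3 \<longrightarrow> trace (Mkl A B C D k k) = trace (matpow B (n + 2 * k))"
proof -
  have dB: "det B = 1" and dD: "det D = 1" using assms(2,4) by (auto simp: SL2_def)
  define s where "s = (trace B)^2 - 1"
  define X where "X k = matpow D k ** C ** matpow B k" for k
  have XS: "X (Suc k) = D ** X k ** B" for k
  proof -
    have b: "matpow B (Suc k) = matpow B k ** B" by (rule matpow_Suc_right)
    have d: "matpow D (Suc k) = D ** matpow D k" by simp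
    show ?thesis unfolding X_def b d by (simp only: matrix_mul_assoc)
  qed
  define f where "f k = trace (Mkl A B C D k k)" for k
  define g where "g k = trace (matpow B (n + 2 * k))" for k
  have fX: "f k = trace (X k ** A)" for k by (simp add: f_def X_def Mkl_def)
  have frec: "f (k + 3) = s * f (k + 2) - s * f (k + 1) + f k" for k
  proof -
    have "X (k+3) = D ** (D ** (D ** X k ** B) ** B) ** B"
      by (simp add: XS numeral_3_eq_3)
    also have "\<dots> = s *\<^sub>R X (k+2) - s *\<^sub>R X (k+1) + X k"
      using key[OF dB dD assms(5)] by (simp add: XS s_def numeral_2_eq_2)
    finally show ?thesis unfolding fX by (simp add: trlin)
  qed
  define Y where "Y k = matpow B (n + 2 * k)" for k
  have YS: "Y (Suc k) = B ** Y k ** B" for k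
  proof -
    have "Y (Suc k) = B ** matpow B (Suc (n + 2 * k))" by (simp add: Y_def)
    also have "\<dots> = B ** (matpow B (n + 2 * k) ** B)" by (simp only: matpow_Suc_right)
    finally show ?thesis by (simp add: Y_def matrix_mul_assoc)
  qed
  have gY: "g k = trace (Y k ** mat 1)" for k by (simp add: g_def Y_def)
  have grec: "g (k + 3) = s * g (k + 2) - s * g (k + 1) + g k" for k
  proof -
    have "Y (k+3) = B ** (B ** (B ** Y k ** B) ** B) ** B"
      by (simp add: YS numeral_3_eq_3)
    also have "\<dots> = s *\<^sub>R Y (k+2) - s *\<^sub>R Y (k+1) + Y k"
      using key[OF dB dB refl] by (simp add: YS s_def numeral_2_eq_2)
    finally have e: "Y (k+3) = s *\<^sub>R Y (k+2) - s *\<^sub>R Y (k+1) + Y k" .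
    show ?thesis unfolding gY e by (rule trlin)
  qed
  have base: "f k = g k" if "k < 3" for k
  proof -
    have "k = 0 \<or> k = 1 \<or> k = 2" using that by linarith
    moreover have "n + 2 * 1 = n + 2" "n + 2 * 2 = n + 4" by simp_all
    ultimately show ?thesis using assms(6,7,8) unfolding f_def g_def
      by (metis add_0_right mult_0_right)
  qed
  have "f k = g k" for k
  proof (induction k rule: less_induct)
    case (less k)
    show ?case
    proof (cases "k < 3")
      case True then show ?thesis by (rule base)
    next
      case False
      then obtain j where j: "k = j + 3" by (metis add.commute le_Suc_ex not_less)
      show ?thesis using less j frec[of j] grec[of j] by simp
    qed
  qed
  then show ?thesis unfolding f_def g_def by simp
qed

end
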